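(* Let $k$ be a field of characteristic $0$, $Y$ a smooth variety over $k$, $p\in Y$, $x_1,\dots,x_n$ a regular system of parameters at $p$, $\mathcal I\subset\mathcal O_Y$ an ideal sheaf, and $J=(x_1^{a_1},\dots,x_k^{a_k})$ with $a_1\le\cdots\le a_k$ positive rationals and $a_1$ a positive integer. Then $J$ is $\mathcal I$-admissible if and only if $J^{(a_1-1)!}$ is $C(\mathcal I,a_1)$-admissible.
   Context: $\mathcal D^{\le j}\mathcal I$ is the ideal generated by all derivatives of order $\le j$ of local sections of $\mathcal I$. For an integer $a\ge1$, $\mathcal G(\mathcal I,a)\subseteq\mathcal O_Y[T]$ is the graded subalgebra generated by $(\mathcal D^{\le a-i}\mathcal I)T^i$, $i=1,\dots,a$, with degree-$j$ piece $\mathcal G_j=\sum\mathcal I^{b_0}(\mathcal D^{\le1}\mathcal I)^{b_1}\cdots(\mathcal D^{\le a-1}\mathcal I)^{b_{a-1}}$ over tuples of nonnegative integers with $\sum_{i=0}^{a-1}(a-i)b_i\ge j$; the coefficient ideal is $C(\mathcal I,a)=\mathcal G_{a!}$. For $\alpha\in\mathbb Q_{>0}$, $J^\alpha=(x_1^{a_1\alpha},\dots,x_k^{a_k\alpha})$. Identify $\hat{\mathcal O}_{Y,p}$ with $\kappa[[x_1,\dots,x_n]]$ ($\kappa$ a coefficient field); the monomial valuation of a center $(x_1^{c_1},\dots,x_k^{c_k})$ is $v(\sum_\alpha c_\alpha x^\alpha)=\min\{\sum_{i=1}^k\alpha_i/c_i:c_\alpha\neq0\}$, and the center is admissible for an ideal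 if this valuation is $\ge1$ on every element of the ideal (in the completion at $p$). *)

theory Defs
  imports Complex_Main
begin

text \<open>Local formal model of the completed local ring at p: the ring
  K[[x_1,...,x_n]] of formal power series in the variables x_1..x_n over a
  field K of characteristic 0.  Monomials are exponent vectors
  m :: nat => nat supported on {1..n}; a power series is a coefficient
  function on monomials vanishing off the admissible monomials.\<close>

definition mono_exps :: "nat \<Rightarrow> (nat \<Rightarrow> nat) set" where
  "mono_exps n = {m. \<forall>i. i \<notin> {1..n} \<longrightarrow> m i = 0}"

definition mps :: "nat \<Rightarrow> ((nat \<Rightarrow> nat) \<Rightarrow> 'K::field_char_0) set" where
  "mps n = {f. \<forall>m. f m \<noteq> 0 \<longrightarrow> m \<in> mono_exps n}"

definition mps_add :: "((nat \<Rightarrow> nat) \<Rightarrow> 'K::field_char_0) \<Rightarrow> ((nat \<Rightarrow> nat) \<Rightarrow> 'K) \<Rightarrow> ((nat \<Rightarrow> nat) \<Rightarrow> 'K)" where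
  "mps_add f g = (\<lambda>m. f m + g m)"

definition mps_mult :: "((nat \<Rightarrow> nat) \<Rightarrow> 'K::field_char_0) \<Rightarrow> ((nat \<Rightarrow> nat) \<Rightarrow> 'K) \<Rightarrow> ((nat \<Rightarrow> nat) \<Rightarrow> 'K)" where
  "mps_mult f g = (\<lambda>m. \<Sum>u\<in>{u. \<forall>i. u i \<le> m i}. f u * g (\<lambda>i. m i - u i))"

definition mps_deriv :: "nat \<Rightarrow> ((nat \<Rightarrow> nat) \<Rightarrow> 'K::field_char_0) \<Rightarrow> ((nat \<Rightarrow> nat) \<Rightarrow> 'K)" where
  "mps_deriv i f = (\<lambda>m. of_nat (m i + 1) * f (m(i := m i + 1)))"

definition is_mps_ideal :: "nat \<Rightarrow> ((nat \<Rightarrow> nat) \<Rightarrow> 'K::field_char_0) set \<Rightarrow> bool" where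
  "is_mps_ideal n I \<longleftrightarrow> I \<subseteq> mps n \<and> (\<lambda>_. 0) \<in> I
     \<and> (\<forall>f\<in>I. \<forall>g\<in>I. mps_add f g \<in> I)
     \<and> (\<forall>f\<in>I. \<forall>g\<in>mps n. mps_mult g f \<in> I)"

definition gen_ideal :: "nat \<Rightarrow> ((nat \<Rightarrow> nat) \<Rightarrow> 'K::field_char_0) set \<Rightarrow> ((nat \<Rightarrow> nat) \<Rightarrow> 'K) set" where
  "gen_ideal n S = \<Inter>{I. is_mps_ideal n I \<and> S \<subseteq> I}"

definition deriv_ideal :: "nat \<Rightarrow> nat \<Rightarrow> ((nat \<Rightarrow> nat) \<Rightarrow> 'K::field_char_0) set \<Rightarrow> ((nat \<Rightarrow> nat) \<Rightarrow> 'K) set" where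
  "deriv_ideal n j I = gen_ideal n
     {foldr mps_deriv ds f | ds f. length ds \<le> j \<and> set ds \<subseteq> {1..n} \<and> f \<in> I}"

definition ideal_prod :: "nat \<Rightarrow> ((nat \<Rightarrow> nat) \<Rightarrow> 'K::field_char_0) set \<Rightarrow> ((nat \<Rightarrow> nat) \<Rightarrow> 'K) set \<Rightarrow> ((nat \<Rightarrow> nat) \<Rightarrow> 'K) set" where
  "ideal_prod n I J = gen_ideal n {mps_mult f g | f g. f \<in> I \<and> g \<in> J}"

primrec ideal_pow :: "nat \<Rightarrow> ((nat \<Rightarrow> nat) \<Rightarrow> 'K::field_char_0) set \<Rightarrow> nat \<Rightarrow> ((nat \<Rightarrow> nat) \<Rightarrow> 'K) set" where
  "ideal_pow n I 0 = mps n"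
| "ideal_pow n I (Suc e) = ideal_prod n (ideal_pow n I e) I"

definition G_term :: "nat \<Rightarrow> ((nat \<Rightarrow> nat) \<Rightarrow> 'K::field_char_0) set \<Rightarrow> nat \<Rightarrow> (nat \<Rightarrow> nat) \<Rightarrow> ((nat \<Rightarrow> nat) \<Rightarrow> 'K) set" where
  "G_term n I a b = foldr (\<lambda>i J. ideal_prod n (ideal_pow n (deriv_ideal n i I) (b i)) J) [0..<a] (mps n)"

definition G_piece :: "nat \<Rightarrow> ((nat \<Rightarrow> nat) \<Rightarrow> 'K::field_char_0) set \<Rightarrow> nat \<Rightarrow> nat \<Rightarrow> ((nat \<Rightarrow> nat) \<Rightarrow> 'K) set" where
  "G_piece n I a j = gen_ideal n
     (\<Union>{G_term n I a b | b. (\<forall>i. i \<ge> a \<longrightarrow> b i = 0) \<and> (\<Sum>i<a. (a - i) * b i) \<ge> j})"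

definition coeff_ideal :: "nat \<Rightarrow> ((nat \<Rightarrow> nat) \<Rightarrow> 'K::field_char_0) set \<Rightarrow> nat \<Rightarrow> ((nat \<Rightarrow> nat) \<Rightarrow> 'K) set" where
  "coeff_ideal n I a = G_piece n I a (fact a)"

text \<open>The center (x_1^{c_1},...,x_k^{c_k}) is admissible for I iff its
  monomial valuation min{sum_{i<=k} m_i/c_i : f m ~= 0} is >= 1 for every f in I.\<close>
definition admissible :: "nat \<Rightarrow> (nat \<Rightarrow> rat) \<Rightarrow> ((nat \<Rightarrow> nat) \<Rightarrow> 'K::field_char_0) set \<Rightarrow> bool" where
  "admissible k c I \<longleftrightarrow> (\<forall>f\<in>I. \<forall>m. f m \<noteq> 0 \<longrightarrow> 1 \<le> (\<Sum>i=1..k. of_nat (m i) / c i))"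

end

theory Submission
  imports Defs "HOL-Library.FuncSet"
begin

definition wt :: "nat \<Rightarrow> (nat \<Rightarrow> rat) \<Rightarrow> (nat \<Rightarrow> nat) \<Rightarrow> rat" where
  "wt k a m = (\<Sum>i=1..k. of_nat (m i) / a i)"

definition Vs :: "nat \<Rightarrow> nat \<Rightarrow> (nat \<Rightarrow> rat) \<Rightarrow> rat \<Rightarrow> ((nat \<Rightarrow> nat) \<Rightarrow> 'K::field_char_0) set" where
  "Vs n k a c = {f \<in> mps n. \<forall>m. f m \<noteq> 0 \<longrightarrow> c \<le> wt k a m}"

lemma gen_ideal_sup: "S \<subseteq> gen_ideal n S"
  unfolding gen_ideal_def by blast

lemma gen_ideal_least: "is_mps_ideal n X \<Longrightarrow> S \<subseteq> X \<Longrightarrow> gen_ideal n S \<subseteq> X"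
  unfolding gen_ideal_def by blast

lemma wt_nonneg: "\<forall>i\<in>{1..k}. 0 < a i \<Longrightarrow> 0 \<le> wt k a m"
  unfolding wt_def by (intro sum_nonneg divide_nonneg_nonneg) (auto simp: less_imp_le)

lemma wt_split: "\<forall>i. u i \<le> m i \<Longrightarrow> wt k a u + wt k a (\<lambda>i. m i - u i) = wt k a m"
  unfolding wt_def sum.distrib[symmetric]
  by (intro sum.cong) (auto simp: of_nat_diff add_divide_distrib[symmetric])

lemma wt_upd: "wt k a (m(i := m i + 1)) = wt k a m + (if i \<in> {1..k} then 1 / a i else 0)"
proof -
  have "\<And>j. of_nat ((m(i := m i + 1)) j) / a j = of_nat (m j) / a j + (if j = i then 1 / a j else 0)"
    by (auto simp: add_divide_distrib)
  then have "wt k a (m(i := m i + 1)) = (\<Sum>j=1..k. of_nat (m j) / a j + (if j = i then 1 / a j else 0))"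
    unfolding wt_def by (intro sum.cong) auto
  also have "\<dots> = wt k a m + (if i \<in> {1..k} then 1 / a i else 0)"
    unfolding sum.distrib wt_def by (simp add: sum.delta')
  finally show ?thesis .
qed

lemma mps_mult_nz:
  assumes "mps_mult f g m \<noteq> 0"
  obtains u where "\<forall>i. u i \<le> m i" "f u \<noteq> 0" "g (\<lambda>i. m i - u i) \<noteq> 0"
proof -
  have "(\<Sum>u\<in>{u. \<forall>i. u i \<le> m i}. f u * g (\<lambda>i. m i - u i)) \<noteq> 0"
    using assms by (simp add: mps_mult_def)
  then obtain u where "u \<in> {u. \<forall>i. u i \<le> m i}" "f u * g (\<lambda>i. m i - u i) \<noteq> 0"
    by (rule sum.not_neutral_contains_not_neutral)
  then show ?thesis using that by auto
qed

lemma mps_mult_mps: "f \<in> mps n \<Longrightarrow> g \<in> mps n \<Longrightarrow> mps_mult f g \<in> (mps n :: ((nat \<Rightarrow> nat) \<Rightarrow> 'K::field_char_0) set)"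
proof -
  assume f: "f \<in> mps n" and g: "g \<in> mps n"
  show ?thesis unfolding mps_def
  proof (intro CollectI allI impI)
    fix m assume "mps_mult f g m \<noteq> 0"
    then obtain u where u: "\<forall>i. u i \<le> m i" "f u \<noteq> 0" "g (\<lambda>i. m i - u i) \<noteq> 0"
      by (rule mps_mult_nz)
    have "u \<in> mono_exps n" "(\<lambda>i. m i - u i) \<in> mono_exps n" using f g u by (auto simp: mps_def)
    then show "m \<in> mono_exps n" unfolding mono_exps_def
    proof (intro CollectI allI impI)
      fix i assume i: "i \<notin> {1..n}"
      have "u i = 0" "m i - u i = 0" using i \<open>u \<in> mono_exps n\<close> \<open>(\<lambda>i. m i - u i) \<in> mono_exps n\<close>
        unfolding mono_exps_def by auto
      then show "m i = 0" using u(1) by (metis diff_is_0_eq le_zero_eq)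
    qed
  qed
qed

lemma mps_deriv_mps: "i \<in> {1..n} \<Longrightarrow> f \<in> mps n \<Longrightarrow> mps_deriv i f \<in> mps n"
proof -
  assume i: "i \<in> {1..n}" and f: "f \<in> mps n"
  show ?thesis unfolding mps_def
  proof (intro CollectI allI impI)
    fix m assume "mps_deriv i f m \<noteq> 0"
    then have "f (m(i := m i + 1)) \<noteq> 0" unfolding mps_deriv_def by auto
    then have "m(i := m i + 1) \<in> mono_exps n" using f unfolding mps_def by auto
    then show "m \<in> mono_exps n" unfolding mono_exps_def
    proof (intro CollectI allI impI)
      fix j assume j: "j \<notin> {1..n}" and h: "m(i := m i + 1) \<in> {m. \<forall>i. i \<notin> {1..n} \<longrightarrow> m i = 0}"
      have "j \<noteq> i" using i j by auto
      then show "m j = 0" using h j by auto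
    qed
  qed
qed

lemma V_ideal:
  assumes pos: "\<forall>i\<in>{1..k}. 0 < a i"
  shows "is_mps_ideal n (Vs n k a c :: ((nat \<Rightarrow> nat) \<Rightarrow> 'K::field_char_0) set)"
  unfolding is_mps_ideal_def
proof (intro conjI ballI)
  show "Vs n k a c \<subseteq> mps n" unfolding Vs_def by auto
  show "(\<lambda>_. 0) \<in> (Vs n k a c :: ((nat \<Rightarrow> nat) \<Rightarrow> 'K::field_char_0) set)"
    unfolding Vs_def mps_def by auto
next
  fix f g :: "(nat \<Rightarrow> nat) \<Rightarrow> 'K" assume "f \<in> Vs n k a c" "g \<in> Vs n k a c"
  then have f': "\<forall>m. f m \<noteq> 0 \<longrightarrow> m \<in> mono_exps n \<and> c \<le> wt k a m"
    and g': "\<forall>m. g m \<noteq> 0 \<longrightarrow> m \<in> mono_exps n \<and> c \<le> wt k a m"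
    unfolding Vs_def mps_def by auto
  have "\<forall>m. mps_add f g m \<noteq> 0 \<longrightarrow> f m \<noteq> 0 \<or> g m \<noteq> 0"
    unfolding mps_add_def by auto
  then show "mps_add f g \<in> Vs n k a c"
    using f' g' unfolding Vs_def mps_def by blast
next
  fix f g :: "(nat \<Rightarrow> nat) \<Rightarrow> 'K" assume f: "f \<in> Vs n k a c" and g: "g \<in> mps n"
  have "mps_mult g f \<in> mps n" using f g mps_mult_mps[of g n f] unfolding Vs_def by auto
  moreover have "c \<le> wt k a m" if "mps_mult g f m \<noteq> 0" for m
  proof -
    obtain u where u: "\<forall>i. u i \<le> m i" "g u \<noteq> 0" "f (\<lambda>i. m i - u i) \<noteq> 0"
      using \<open>mps_mult g f m \<noteq> 0\<close> by (rule mps_mult_nz)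
    have "c \<le> wt k a (\<lambda>i. m i - u i)" using f u unfolding Vs_def by auto
    also have "\<dots> \<le> wt k a m" using wt_split[OF u(1), of k a] wt_nonneg[OF pos, of u] by linarith
    finally show ?thesis .
  qed
  ultimately show "mps_mult g f \<in> Vs n k a c" unfolding Vs_def by auto
qed

lemma V_mult:
  assumes "f \<in> Vs n k a c" "g \<in> Vs n k a d"
  shows "mps_mult f g \<in> Vs n k a (c + d)"
proof -
  have "mps_mult f g \<in> mps n" using assms mps_mult_mps unfolding Vs_def by blast
  moreover have "c + d \<le> wt k a m" if "mps_mult f g m \<noteq> 0" for m
  proof -
    obtain u where u: "\<forall>i. u i \<le> m i" "f u \<noteq> 0" "g (\<lambda>i. m i - u i) \<noteq> 0"
      using \<open>mps_mult f g m \<noteq> 0\<close> by (rule mps_mult_nz)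
    have "c \<le> wt k a u" "d \<le> wt k a (\<lambda>i. m i - u i)" using assms u unfolding Vs_def by auto
    then show ?thesis using wt_split[OF u(1), of k a] by linarith
  qed
  ultimately show ?thesis unfolding Vs_def by auto
qed

lemma V_mono: "c' \<le> c \<Longrightarrow> Vs n k a c \<subseteq> Vs n k a c'"
  unfolding Vs_def by auto

lemma ideal_prod_V:
  assumes pos: "\<forall>i\<in>{1..k}. 0 < a i" and "X \<subseteq> Vs n k a c" "Y \<subseteq> Vs n k a d"
  shows "ideal_prod n X Y \<subseteq> Vs n k a (c + d)"
  unfolding ideal_prod_def
  by (rule gen_ideal_least[OF V_ideal[OF pos]]) (use assms V_mult in blast)

lemma mps_V0: "\<forall>i\<in>{1..k}. 0 < a i \<Longrightarrow> mps n \<subseteq> Vs n k a 0"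
  unfolding Vs_def using wt_nonneg by auto

lemma ideal_pow_V:
  assumes pos: "\<forall>i\<in>{1..k}. 0 < a i" and "X \<subseteq> Vs n k a c"
  shows "ideal_pow n X e \<subseteq> Vs n k a (of_nat e * c)"
proof (induction e)
  case 0 then show ?case using mps_V0[OF pos] by simp
next
  case (Suc e)
  have "ideal_prod n (ideal_pow n X e) X \<subseteq> Vs n k a (of_nat e * c + c)"
    by (rule ideal_prod_V[OF pos Suc assms(2)])
  then show ?case by (simp add: algebra_simps)
qed

lemma V_deriv:
  assumes pos: "\<forall>i\<in>{1..k}. 0 < a i" and mon: "\<forall>i\<in>{1..k}. a 1 \<le> a i" and a1: "0 < a 1"
    and i: "i \<in> {1..n}" and f: "f \<in> Vs n k a c"
  shows "mps_deriv i f \<in> Vs n k a (c - 1 / a 1)"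
proof -
  have "mps_deriv i f \<in> mps n" using mps_deriv_mps[OF i] f unfolding Vs_def by auto
  moreover have "c - 1 / a 1 \<le> wt k a m" if "mps_deriv i f m \<noteq> 0" for m
  proof -
    have "f (m(i := m i + 1)) \<noteq> 0" using that unfolding mps_deriv_def by auto
    then have "c \<le> wt k a (m(i := m i + 1))" using f unfolding Vs_def by auto
    moreover have "(if i \<in> {1..k} then 1 / a i else 0) \<le> 1 / a 1"
      using mon a1 pos by (auto intro: divide_left_mono)
    ultimately show ?thesis unfolding wt_upd by linarith
  qed
  ultimately show ?thesis unfolding Vs_def by auto
qed

lemma foldr_deriv_V:
  assumes pos: "\<forall>i\<in>{1..k}. 0 < a i" and mon: "\<forall>i\<in>{1..k}. a 1 \<le> a i" and a1: "0 < a 1"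
    and "set ds \<subseteq> {1..n}" and "f \<in> Vs n k a c"
  shows "foldr mps_deriv ds f \<in> Vs n k a (c - of_nat (length ds) / a 1)"
  using assms(4)
proof (induction ds)
  case Nil then show ?case using assms(5) by simp
next
  case (Cons d ds)
  then have mem: "mps_deriv d (foldr mps_deriv ds f) \<in> Vs n k a (c - of_nat (length ds) / a 1 - 1 / a 1)"
    by (intro V_deriv[OF pos mon a1]) auto
  have eq: "c - of_nat (length ds) / a 1 - 1 / a 1 = c - of_nat (length (d # ds)) / a 1"
    by (simp add: add_divide_distrib)
  show ?case using mem unfolding eq by simp
qed

lemma deriv_ideal_V:
  assumes pos: "\<forall>i\<in>{1..k}. 0 < a i" and mon: "\<forall>i\<in>{1..k}. a 1 \<le> a i" and a1: "0 < a 1"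
    and I: "I \<subseteq> Vs n k a 1"
  shows "deriv_ideal n j I \<subseteq> Vs n k a (1 - of_nat j / a 1)"
  unfolding deriv_ideal_def
proof (rule gen_ideal_least[OF V_ideal[OF pos]], safe)
  fix ds f assume "length ds \<le> j" "set ds \<subseteq> {1..n}" "f \<in> I"
  then have "foldr mps_deriv ds f \<in> Vs n k a (1 - of_nat (length ds) / a 1)"
    using foldr_deriv_V[OF pos mon a1] I by blast
  moreover have "1 - of_nat j / a 1 \<le> 1 - of_nat (length ds) / a 1"
    using \<open>length ds \<le> j\<close> a1 by (simp add: divide_right_mono)
  ultimately show "foldr mps_deriv ds f \<in> Vs n k a (1 - of_nat j / a 1)"
    using V_mono by blast
qed

lemma G_foldr_V:
  assumes pos: "\<forall>i\<in>{1..k}. 0 < a i" and mon: "\<forall>i\<in>{1..k}. a 1 \<le> a i" and a1: "0 < a 1"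
    and I: "I \<subseteq> Vs n k a 1"
  shows "foldr (\<lambda>i J. ideal_prod n (ideal_pow n (deriv_ideal n i I) (b i)) J) xs (mps n)
     \<subseteq> Vs n k a (sum_list (map (\<lambda>i. of_nat (b i) * (1 - of_nat i / a 1)) xs))"
proof (induction xs)
  case Nil then show ?case using mps_V0[OF pos] by simp
next
  case (Cons x xs)
  have "ideal_pow n (deriv_ideal n x I) (b x) \<subseteq> Vs n k a (of_nat (b x) * (1 - of_nat x / a 1))"
    by (rule ideal_pow_V[OF pos deriv_ideal_V[OF pos mon a1 I]])
  from ideal_prod_V[OF pos this Cons] show ?case by simp
qed

lemma G_piece_V:
  assumes pos: "\<forall>i\<in>{1..k}. 0 < a i" and mon: "\<forall>i\<in>{1..k}. a 1 \<le> a i"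
    and a1: "a 1 = of_nat a1" "1 \<le> a1"
    and I: "I \<subseteq> Vs n k a 1"
  shows "G_piece n I a1 (fact a1) \<subseteq> Vs n k a (of_nat (fact (a1 - 1)))"
  unfolding G_piece_def
proof (rule gen_ideal_least[OF V_ideal[OF pos]], safe)
  have a1p: "0 < a 1" using a1 by simp
  fix b f assume b: "fact a1 \<le> (\<Sum>i<a1. (a1 - i) * b i)" and f: "f \<in> G_term n I a1 b"
  have "f \<in> Vs n k a (sum_list (map (\<lambda>i. of_nat (b i) * (1 - of_nat i / a 1)) [0..<a1]))"
    using f G_foldr_V[OF pos mon a1p I] unfolding G_term_def by blast
  moreover have "sum_list (map (\<lambda>i. of_nat (b i) * (1 - of_nat i / a 1)) [0..<a1])
      = (\<Sum>i<a1. of_nat (b i) * (1 - of_nat i / a 1))"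
    by (simp add: interv_sum_list_conv_sum_set_nat atLeast0LessThan)
  moreover have "\<dots> = (\<Sum>i<a1. of_nat ((a1 - i) * b i) / of_nat a1)"
  proof (intro sum.cong refl)
    fix i assume "i \<in> {..<a1}"
    then show "of_nat (b i) * (1 - of_nat i / a 1) = (of_nat ((a1 - i) * b i) / of_nat a1 :: rat)"
      using a1 by (simp add: of_nat_diff field_simps)
  qed
  moreover have "\<dots> = of_nat (\<Sum>i<a1. (a1 - i) * b i) / of_nat a1"
    by (simp add: sum_divide_distrib)
  moreover have "(of_nat (fact (a1 - 1)) :: rat) \<le> of_nat (\<Sum>i<a1. (a1 - i) * b i) / of_nat a1"
  proof -
    obtain j where j: "a1 = Suc j" using a1 by (cases a1) auto
    have "(of_nat (fact a1) :: rat) \<le> of_nat (\<Sum>i<a1. (a1 - i) * b i)" using b by (simp only: of_nat_le_iff)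
    then show ?thesis unfolding j by (simp add: field_simps)
  qed
  ultimately show "f \<in> Vs n k a (of_nat (fact (a1 - 1)))" using V_mono by (metis subsetD)
qed

lemma adm_scale:
  assumes "0 < N"
  shows "admissible k (\<lambda>i. a i * of_nat N) X \<longleftrightarrow> (\<forall>f\<in>X. \<forall>m. f m \<noteq> 0 \<longrightarrow> of_nat N \<le> wt k a m)"
proof -
  have "\<And>m. (\<Sum>i=1..k. of_nat (m i) / (a i * of_nat N)) = wt k a m / of_nat N"
    unfolding wt_def sum_divide_distrib by (simp add: divide_divide_eq_left)
  then show ?thesis unfolding admissible_def using assms by (simp add: le_divide_eq_1_pos)
qed

definition lexless :: "(nat \<Rightarrow> nat) \<Rightarrow> (nat \<Rightarrow> nat) \<Rightarrow> bool" where
  "lexless u v \<longleftrightarrow> (\<exists>j. u j < v j \<and> (\<forall>i<j. u i = v i))"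

definition lexle :: "(nat \<Rightarrow> nat) \<Rightarrow> (nat \<Rightarrow> nat) \<Rightarrow> bool" where
  "lexle u v \<longleftrightarrow> u = v \<or> lexless u v"

lemma lexless_irrefl: "\<not> lexless u u"
  unfolding lexless_def by auto

lemma lexless_add:
  assumes "lexless a u" "lexle b v"
  shows "lexless (\<lambda>i. a i + b i) (\<lambda>i. u i + v i)"
proof -
  obtain j where j: "a j < u j" "\<forall>i<j. a i = u i" using assms(1) unfolding lexless_def by auto
  show ?thesis
  proof (cases "b = v")
    case True
    then show ?thesis using j unfolding lexless_def by (intro exI[of _ j]) auto
  next
    case False
    then obtain j' where j': "b j' < v j'" "\<forall>i<j'. b i = v i" using assms(2) unfolding lexle_def lexless_def by auto
    show ?thesis
    proof (cases j j' rule: linorder_cases)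
      case less
      then show ?thesis using j j' unfolding lexless_def by (intro exI[of _ j]) auto
    next
      case equal
      then show ?thesis using j j' unfolding lexless_def by (intro exI[of _ j]) auto
    next
      case greater
      then show ?thesis using j j' unfolding lexless_def by (intro exI[of _ j']) auto
    qed
  qed
qed

lemma lexle_add:
  assumes "lexle a u" "lexle b v"
  shows "lexle (\<lambda>i. a i + b i) (\<lambda>i. u i + v i)"
proof (cases "a = u")
  case True
  show ?thesis
  proof (cases "b = v")
    case True
    then show ?thesis using \<open>a = u\<close> unfolding lexle_def by auto
  next
    case False
    then have "lexless b v" using assms(2) unfolding lexle_def by auto
    from lexless_add[OF this, of a u] have "lexless (\<lambda>i. b i + a i) (\<lambda>i. v i + u i)"
      using True unfolding lexle_def by auto
    then show ?thesis unfolding lexle_def by (simp add: add.commute)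
  qed
next
  case False
  then have "lexless a u" using assms(1) unfolding lexle_def by auto
  from lexless_add[OF this assms(2)] show ?thesis unfolding lexle_def by auto
qed

lemma lex_add_unique:
  assumes "lexle a u" "lexle b v" "(\<lambda>i. u i + v i) = (\<lambda>i. a i + b i)"
  shows "u = a \<and> v = b"
proof -
  have ua: "u = a"
  proof (rule ccontr)
    assume "u \<noteq> a"
    then have "lexless a u" using assms(1) unfolding lexle_def by auto
    from lexless_add[OF this assms(2)] assms(3) lexless_irrefl show False by metis
  qed
  have "v = b"
  proof (rule ccontr)
    assume "v \<noteq> b"
    then have "lexless b v" using assms(2) unfolding lexle_def by auto
    from lexless_add[OF this, of a a] have "lexless (\<lambda>i. b i + a i) (\<lambda>i. v i + a i)"
      unfolding lexle_def by auto
    then have "lexless (\<lambda>i. a i + b i) (\<lambda>i. u i + v i)" using ua by (simp add: add.commute)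
    with assms(3) lexless_irrefl show False by metis
  qed
  with ua show ?thesis by simp
qed

lemma lex_min_aux:
  assumes "m \<in> S"
  shows "\<exists>m0\<in>S. \<forall>u\<in>S. (\<forall>i<j. m0 i = u i) \<or> lexless m0 u"
proof (induction j)
  case 0 then show ?case using assms by auto
next
  case (Suc j)
  then obtain m0 where m0: "m0 \<in> S" "\<forall>u\<in>S. (\<forall>i<j. m0 i = u i) \<or> lexless m0 u" by auto
  define T where "T = {u \<in> S. \<forall>i<j. u i = m0 i}"
  have "m0 \<in> T" using m0 unfolding T_def by auto
  from ex_has_least_nat[of "\<lambda>u. u \<in> T", OF this, of "\<lambda>u. u j"]
  obtain m1 where m1: "m1 \<in> T" "\<forall>y. y \<in> T \<longrightarrow> m1 j \<le> y j" by auto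
  have "\<forall>u\<in>S. (\<forall>i<Suc j. m1 i = u i) \<or> lexless m1 u"
  proof
    fix u assume u: "u \<in> S"
    show "(\<forall>i<Suc j. m1 i = u i) \<or> lexless m1 u"
    proof (cases "u \<in> T")
      case True
      then have le: "m1 j \<le> u j" using m1 by auto
      have eq: "\<forall>i<j. m1 i = u i" using True m1(1) unfolding T_def by auto
      show ?thesis
      proof (cases "m1 j = u j")
        case True
        then show ?thesis using eq less_Suc_eq by auto
      next
        case False
        then have "m1 j < u j" using le by auto
        then show ?thesis using eq unfolding lexless_def by auto
      qed
    next
      case False
      then have "\<not> (\<forall>i<j. m0 i = u i)" using u unfolding T_def by auto
      then have "lexless m0 u" using m0 u by auto
      then obtain j' where j': "m0 j' < u j'" "\<forall>i<j'. m0 i = u i" unfolding lexless_def by auto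
      have "j' < j"
      proof (rule ccontr)
        assume "\<not> j' < j"
        then have "\<forall>i<j. m0 i = u i" using j' by auto
        with \<open>\<not> (\<forall>i<j. m0 i = u i)\<close> show False by blast
      qed
      have agree: "\<forall>i<j. m1 i = m0 i" using m1(1) unfolding T_def by auto
      have "m1 j' < u j'" "\<forall>i<j'. m1 i = u i" using j' agree \<open>j' < j\<close> by auto
      then show ?thesis unfolding lexless_def by auto
    qed
  qed
  then show ?case using m1(1) unfolding T_def by auto
qed

lemma lex_min:
  assumes "m \<in> S" "S \<subseteq> mono_exps n"
  shows "\<exists>m0\<in>S. \<forall>u\<in>S. lexle m0 u"
proof -
  obtain m0 where m0: "m0 \<in> S" "\<forall>u\<in>S. (\<forall>i<Suc n. m0 i = u i) \<or> lexless m0 u"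
    using lex_min_aux[OF assms(1), of "Suc n"] by auto
  have "lexle m0 u" if u: "u \<in> S" for u
  proof (cases "\<forall>i<Suc n. m0 i = u i")
    case True
    have "m0 = u"
    proof
      fix i show "m0 i = u i"
      proof (cases "i < Suc n")
        case True then show ?thesis using \<open>\<forall>i<Suc n. m0 i = u i\<close> by auto
      next
        case False
        then have "i \<notin> {1..n}" by auto
        moreover have "m0 \<in> mono_exps n" "u \<in> mono_exps n" using m0(1) u assms(2) by auto
        ultimately show ?thesis unfolding mono_exps_def by auto
      qed
    qed
    then show ?thesis unfolding lexle_def by auto
  next
    case False then show ?thesis using m0 u unfolding lexle_def by auto
  qed
  then show ?thesis using m0(1) by auto
qed

lemma fin_bounded:
  assumes "finite A"
  shows "finite {v :: nat \<Rightarrow> nat. \<forall>i. v i \<le> B i \<and> (i \<notin> A \<longrightarrow> v i = 0)}" (is "finite ?S")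
proof -
  have "inj_on (\<lambda>v. restrict v A) ?S"
  proof (rule inj_onI)
    fix v w assume v: "v \<in> ?S" and w: "w \<in> ?S" and eq: "restrict v A = restrict w A"
    show "v = w"
    proof
      fix i show "v i = w i"
      proof (cases "i \<in> A")
        case True then show ?thesis using eq by (metis restrict_apply')
      next
        case False then show ?thesis using v w by auto
      qed
    qed
  qed
  moreover have "(\<lambda>v. restrict v A) ` ?S \<subseteq> Pi\<^sub>E A (\<lambda>i. {..B i})" by auto
  moreover have "finite (Pi\<^sub>E A (\<lambda>i. {..B i}))" using assms by (intro finite_PiE) auto
  ultimately show ?thesis by (meson finite_imageD finite_subset)
qed

definition good :: "nat \<Rightarrow> nat \<Rightarrow> (nat \<Rightarrow> rat) \<Rightarrow> ((nat \<Rightarrow> nat) \<Rightarrow> 'K::field_char_0) \<Rightarrow> rat \<Rightarrow> (nat \<Rightarrow> nat) \<Rightarrow> bool" where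
  "good n k a f w m0 \<longleftrightarrow> f m0 \<noteq> 0 \<and> m0 \<in> mono_exps n \<and> wt k a m0 = w
     \<and> (\<forall>m. f m \<noteq> 0 \<longrightarrow> w \<le> wt k a m) \<and> (\<forall>m. f m \<noteq> 0 \<and> wt k a m = w \<longrightarrow> lexle m0 m)"

lemma good_mult:
  assumes f: "good n k a f wF mf" and g: "good n k a g wG mg"
  shows "good n k a (mps_mult f g) (wF + wG) (\<lambda>i. mf i + mg i)"
proof -
  define mm where "mm = (\<lambda>i. mf i + mg i)"
  have mmm: "mm \<in> mono_exps n" using f g unfolding good_def mono_exps_def mm_def by auto
  have mmu: "(\<lambda>i. mm i - mf i) = mg" unfolding mm_def by auto
  have wmm: "wt k a mm = wF + wG"
    using wt_split[of mf mm k a] f g unfolding mmu good_def by (auto simp: mm_def)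
  have key: "wt k a u = wF \<and> wt k a (\<lambda>i. m i - u i) = wG \<and> lexle mf u \<and> lexle mg (\<lambda>i. m i - u i)"
    if "\<forall>i. u i \<le> m i" "f u \<noteq> 0" "g (\<lambda>i. m i - u i) \<noteq> 0" "wt k a m = wF + wG" for m u
  proof -
    have "wF \<le> wt k a u" "wG \<le> wt k a (\<lambda>i. m i - u i)" using f g that unfolding good_def by auto
    moreover have "wt k a u + wt k a (\<lambda>i. m i - u i) = wt k a m" using wt_split that(1) by blast
    ultimately have "wt k a u = wF" "wt k a (\<lambda>i. m i - u i) = wG" using that(4) by linarith+
    then show ?thesis using f g that unfolding good_def by auto
  qed
  have lowb: "wF + wG \<le> wt k a m" if nz0: "mps_mult f g m \<noteq> 0" for m
  proof -
    obtain u where u: "\<forall>i. u i \<le> m i" "f u \<noteq> 0" "g (\<lambda>i. m i - u i) \<noteq> 0"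
      using nz0 by (rule mps_mult_nz)
    have "wF \<le> wt k a u" "wG \<le> wt k a (\<lambda>i. m i - u i)" using f g u unfolding good_def by auto
    then show ?thesis using wt_split[OF u(1), of k a] by linarith
  qed
  have lexb: "lexle mm m" if nz0: "mps_mult f g m \<noteq> 0" and w0: "wt k a m = wF + wG" for m
  proof -
    obtain u where u: "\<forall>i. u i \<le> m i" "f u \<noteq> 0" "g (\<lambda>i. m i - u i) \<noteq> 0"
      using nz0 by (rule mps_mult_nz)
    from key[OF u w0] have "lexle mf u" "lexle mg (\<lambda>i. m i - u i)" by auto
    from lexle_add[OF this] have "lexle mm (\<lambda>i. u i + (m i - u i))" unfolding mm_def .
    moreover have "(\<lambda>i. u i + (m i - u i)) = m" using u(1) by (auto simp: fun_eq_iff)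
    ultimately show ?thesis by simp
  qed
  have nz: "mps_mult f g mm \<noteq> 0"
  proof -
    define U where "U = {u. \<forall>i. u i \<le> mm i}"
    define F where "F = (\<lambda>u. f u * g (\<lambda>i. mm i - u i))"
    have finU: "finite U"
    proof (rule finite_subset[OF _ fin_bounded[of "{1..n}" mm]])
      show "U \<subseteq> {v. \<forall>i. v i \<le> mm i \<and> (i \<notin> {1..n} \<longrightarrow> v i = 0)}"
      proof (intro subsetI CollectI allI conjI impI)
        fix v i assume v: "v \<in> U"
        then show "v i \<le> mm i" unfolding U_def by auto
        assume "i \<notin> {1..n}"
        then have "mm i = 0" using mmm unfolding mono_exps_def by auto
        then show "v i = 0" using v unfolding U_def by (metis (mono_tags) mem_Collect_eq le_zero_eq)
      qed
    qed simp
    have mfU: "mf \<in> U" unfolding U_def mm_def by auto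
    have zero: "F u = 0" if uU: "u \<in> U - {mf}" for u
    proof (rule ccontr)
      assume "F u \<noteq> 0"
      then have u: "f u \<noteq> 0" "g (\<lambda>i. mm i - u i) \<noteq> 0" unfolding F_def by auto
      have ule: "\<forall>i. u i \<le> mm i" using uU unfolding U_def by auto
      from key[OF ule u wmm] have "lexle mf u" "lexle mg (\<lambda>i. mm i - u i)" by auto
      moreover have "(\<lambda>i. u i + (mm i - u i)) = (\<lambda>i. mf i + mg i)" using ule by (auto simp: fun_eq_iff mm_def)
      ultimately have "u = mf" using lex_add_unique by blast
      then show False using uU by auto
    qed
    have "mps_mult f g mm = sum F U" unfolding mps_mult_def F_def U_def by simp
    also have "\<dots> = F mf + sum F (U - {mf})" using sum.remove[OF finU mfU] by simp
    also have "\<dots> = F mf" using zero by simp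
    also have "\<dots> = f mf * g mg" unfolding F_def mmu ..
    finally show ?thesis using f g unfolding good_def by auto
  qed
  show ?thesis unfolding good_def using nz mmm wmm lowb lexb unfolding mm_def by auto
qed

lemma min_weight:
  assumes pos: "\<forall>i\<in>{1..k}. 0 < a i" and f1: "f m1 \<noteq> 0"
  shows "\<exists>w m. f m \<noteq> 0 \<and> wt k a m = w \<and> (\<forall>m'. f m' \<noteq> 0 \<longrightarrow> w \<le> wt k a m') \<and> w \<le> wt k a m1"
proof -
  define T where "T = {m. f m \<noteq> 0 \<and> wt k a m \<le> wt k a m1}"
  define R where "R = (\<lambda>m::nat \<Rightarrow> nat. (\<lambda>i. if i \<in> {1..k} then m i else 0))"
  define B where "B = (\<lambda>i. nat \<lceil>a i * wt k a m1\<rceil>)"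
  have wtR: "wt k a (R m) = wt k a m" for m
    unfolding wt_def R_def by (intro sum.cong) auto
  have "R ` T \<subseteq> {v. \<forall>i. v i \<le> B i \<and> (i \<notin> {1..k} \<longrightarrow> v i = 0)}"
  proof (intro subsetI CollectI allI conjI impI)
    fix v i assume "v \<in> R ` T"
    then obtain m where m: "m \<in> T" and v: "v = R m" by auto
    show "v i \<le> B i"
    proof (cases "i \<in> {1..k}")
      case False then show ?thesis by (auto simp: v R_def)
    next
      case True
      have "of_nat (m i) / a i \<le> wt k a m"
        unfolding wt_def using True pos
        by (intro member_le_sum) (auto intro!: divide_nonneg_nonneg simp: less_imp_le)
      also have "\<dots> \<le> wt k a m1" using m unfolding T_def by auto
      finally have "of_nat (m i) \<le> a i * wt k a m1" using pos True by (simp add: pos_divide_le_eq mult.commute)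
      also have "\<dots> \<le> of_int \<lceil>a i * wt k a m1\<rceil>" by (rule le_of_int_ceiling)
      finally have "int (m i) \<le> \<lceil>a i * wt k a m1\<rceil>" by (metis of_int_le_iff of_int_of_nat_eq)
      then show ?thesis unfolding v R_def B_def using True by simp
    qed
  next
    fix v i assume "v \<in> R ` T" "i \<notin> {1..k}"
    then show "v i = 0" unfolding R_def by auto
  qed
  then have "finite (R ` T)" using fin_bounded[of "{1..k}" B] finite_subset by auto
  then have finW: "finite (wt k a ` T)"
  proof -
    have "wt k a ` T = wt k a ` (R ` T)" by (auto simp: image_image wtR)
    then show ?thesis using \<open>finite (R ` T)\<close> by simp
  qed
  have m1T: "m1 \<in> T" unfolding T_def using f1 by auto
  define w where "w = Min (wt k a ` T)"
  have "w \<in> wt k a ` T" unfolding w_def using finW m1T by (intro Min_in) auto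
  then obtain m where m: "m \<in> T" "wt k a m = w" by auto
  have wm1: "w \<le> wt k a m1" unfolding w_def using finW m1T by (intro Min_le) auto
  have "w \<le> wt k a m'" if "f m' \<noteq> 0" for m'
  proof (cases "wt k a m' \<le> wt k a m1")
    case True
    then have "m' \<in> T" unfolding T_def using that by auto
    then show ?thesis unfolding w_def using finW by (intro Min_le) auto
  next
    case False then show ?thesis using wm1 by linarith
  qed
  then show ?thesis using m wm1 unfolding T_def by blast
qed

definition mone :: "(nat \<Rightarrow> nat) \<Rightarrow> 'K::field_char_0" where
  "mone m = (if m = (\<lambda>_. 0) then 1 else 0)"

lemma good_mone: "good n k a (mone :: (nat \<Rightarrow> nat) \<Rightarrow> 'K::field_char_0) 0 (\<lambda>_. 0)"
  unfolding good_def mone_def mono_exps_def lexle_def by (auto simp: wt_def)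

lemma mone_mps: "(mone :: (nat \<Rightarrow> nat) \<Rightarrow> 'K::field_char_0) \<in> mps n"
  unfolding mps_def mone_def mono_exps_def by auto

lemma mone_mult: "mps_mult mone mone = (mone :: (nat \<Rightarrow> nat) \<Rightarrow> 'K::field_char_0)"
proof
  fix m :: "nat \<Rightarrow> nat"
  show "mps_mult mone mone m = (mone m :: 'K)"
  proof (cases "m = (\<lambda>_. 0)")
    case True
    have "{u. \<forall>i. u i \<le> m i} = {(\<lambda>_. 0)}" using True by (auto simp: fun_eq_iff)
    then show ?thesis unfolding mps_mult_def using True by (simp add: mone_def)
  next
    case False
    have z: "mone u * mone (\<lambda>i. m i - u i) = (0::'K)" for u
      using False unfolding mone_def by auto
    have "mps_mult mone mone m = (0::'K)" unfolding mps_mult_def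
      by (rule sum.neutral) (use z in blast)
    then show ?thesis using False by (simp add: mone_def)
  qed
qed

primrec pw :: "((nat \<Rightarrow> nat) \<Rightarrow> 'K::field_char_0) \<Rightarrow> nat \<Rightarrow> ((nat \<Rightarrow> nat) \<Rightarrow> 'K)" where
  "pw f 0 = mone"
| "pw f (Suc e) = mps_mult (pw f e) f"

lemma good_pw:
  assumes "good n k a f w m0"
  shows "good n k a (pw f e) (of_nat e * w) (\<lambda>i. e * m0 i)"
proof (induction e)
  case 0 then show ?case using good_mone by simp
next
  case (Suc e)
  from good_mult[OF Suc assms]
  have "good n k a (pw f (Suc e)) (of_nat e * w + w) (\<lambda>i. e * m0 i + m0 i)" by simp
  moreover have "of_nat e * w + w = of_nat (Suc e) * w" by (simp add: algebra_simps)
  moreover have "(\<lambda>i. e * m0 i + m0 i) = (\<lambda>i. Suc e * m0 i)" by auto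
  ultimately show ?case by simp
qed

lemma pw_mem: "f \<in> X \<Longrightarrow> pw f e \<in> ideal_pow n X e"
proof (induction e)
  case 0 then show ?case using mone_mps by simp
next
  case (Suc e)
  show ?case unfolding ideal_pow.simps pw.simps ideal_prod_def
  proof (rule subsetD[OF gen_ideal_sup])
    show "mps_mult (pw f e) f \<in> {mps_mult f g |f g. f \<in> ideal_pow n X e \<and> g \<in> X}"
      using Suc by blast
  qed
qed

lemma deriv0: "f \<in> I \<Longrightarrow> f \<in> deriv_ideal n j I"
proof -
  assume f: "f \<in> I"
  show ?thesis unfolding deriv_ideal_def
  proof (rule subsetD[OF gen_ideal_sup])
    show "f \<in> {foldr mps_deriv ds f | ds f. length ds \<le> j \<and> set ds \<subseteq> {1..n} \<and> f \<in> I}"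
      using f by (intro CollectI exI[of _ "[]"] exI[of _ f]) simp
  qed
qed

lemma mone_foldr:
  "\<forall>i\<in>set xs. b i = 0 \<Longrightarrow> mone \<in> foldr (\<lambda>i J. ideal_prod n (ideal_pow n (deriv_ideal n i I) (b i)) J) xs (mps n)"
proof (induction xs)
  case Nil then show ?case using mone_mps by simp
next
  case (Cons x xs)
  then have "mps_mult mone mone \<in> {mps_mult f g | f g. f \<in> ideal_pow n (deriv_ideal n x I) (b x)
      \<and> g \<in> foldr (\<lambda>i J. ideal_prod n (ideal_pow n (deriv_ideal n i I) (b i)) J) xs (mps n)}"
    using mone_mps by (intro CollectI exI[of _ mone] conjI) auto
  then show ?case unfolding foldr.simps o_def ideal_prod_def mone_mult by (rule subsetD[OF gen_ideal_sup])
qed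

lemma G_mem:
  assumes a1: "1 \<le> a1" and f: "f \<in> I"
  shows "mps_mult (pw f (fact (a1 - 1))) mone \<in> coeff_ideal n I a1"
proof -
  define N where "N = (fact (a1 - 1) :: nat)"
  define b where "b = (\<lambda>i::nat. if i = 0 then N else 0)"
  have up: "[0..<a1] = 0 # [1..<a1]" using a1 by (simp add: upt_conv_Cons)
  have "pw f N \<in> ideal_pow n (deriv_ideal n 0 I) (b 0)"
    unfolding b_def using pw_mem[OF deriv0[OF f]] by simp
  moreover have "mone \<in> foldr (\<lambda>i J. ideal_prod n (ideal_pow n (deriv_ideal n i I) (b i)) J) [1..<a1] (mps n)"
    by (rule mone_foldr) (auto simp: b_def)
  ultimately have "mps_mult (pw f N) mone \<in> {mps_mult f g |f g. f \<in> ideal_pow n (deriv_ideal n 0 I) (b 0)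
      \<and> g \<in> foldr (\<lambda>i J. ideal_prod n (ideal_pow n (deriv_ideal n i I) (b i)) J) [1..<a1] (mps n)}"
    by auto
  then have "mps_mult (pw f N) mone \<in> G_term n I a1 b"
    unfolding G_term_def up foldr.simps o_def ideal_prod_def by (rule subsetD[OF gen_ideal_sup])
  moreover have "\<forall>i. i \<ge> a1 \<longrightarrow> b i = 0" using a1 unfolding b_def by auto
  moreover have "(\<Sum>i<a1. (a1 - i) * b i) = a1 * N"
  proof -
    have "(\<Sum>i<a1. (a1 - i) * b i) = (\<Sum>i<a1. if i = 0 then a1 * N else 0)"
      unfolding b_def by (intro sum.cong) auto
    also have "\<dots> = a1 * N" using a1 by (simp add: sum.delta)
    finally show ?thesis .
  qed
  moreover have "a1 * N = fact a1"
  proof -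
    obtain j where "a1 = Suc j" using a1 by (cases a1) auto
    then show ?thesis unfolding N_def by simp
  qed
  ultimately have "G_term n I a1 b \<in> {G_term n I a1 b | b. (\<forall>i. i \<ge> a1 \<longrightarrow> b i = 0) \<and> (\<Sum>i<a1. (a1 - i) * b i) \<ge> fact a1}"
    by (intro CollectI exI[of _ b] conjI refl) auto
  then have "mps_mult (pw f N) mone \<in> \<Union>{G_term n I a1 b | b. (\<forall>i. i \<ge> a1 \<longrightarrow> b i = 0) \<and> (\<Sum>i<a1. (a1 - i) * b i) \<ge> fact a1}"
    using \<open>mps_mult (pw f N) mone \<in> G_term n I a1 b\<close> by (rule UnionI)
  then show ?thesis unfolding coeff_ideal_def G_piece_def N_def
    by (rule subsetD[OF gen_ideal_sup])
qed

theorem lemma5p6: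
  fixes I :: "((nat \<Rightarrow> nat) \<Rightarrow> 'K::field_char_0) set"
    and n k a1 :: nat and a :: "nat \<Rightarrow> rat"
  assumes "1 \<le> k" and "k \<le> n"
    and "is_mps_ideal n I"
    and "\<forall>i\<in>{1..k}. 0 < a i"
    and "\<forall>i j. 1 \<le> i \<and> i \<le> j \<and> j \<le> k \<longrightarrow> a i \<le> a j"
    and "1 \<le> a1" and "a 1 = of_nat a1"
  shows "admissible k a I \<longleftrightarrow>
         admissible k (\<lambda>i. a i * of_nat (fact (a1 - 1))) (coeff_ideal n I a1)"
proof -
  note pos = assms(4)
  have mon: "\<forall>i\<in>{1..k}. a 1 \<le> a i" using assms(5) by auto
  have Imps: "I \<subseteq> mps n" using assms(3) unfolding is_mps_ideal_def by auto
  define N where "N = (fact (a1 - 1) :: nat)"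
  have Npos: "0 < N" unfolding N_def by simp
  have admI: "admissible k a I \<longleftrightarrow> (\<forall>f\<in>I. \<forall>m. f m \<noteq> 0 \<longrightarrow> 1 \<le> wt k a m)"
    unfolding admissible_def wt_def ..
  show ?thesis
  proof
    assume adm: "admissible k a I"
    then have "I \<subseteq> Vs n k a 1" using Imps unfolding admI Vs_def by auto
    from G_piece_V[OF pos mon assms(7) assms(6) this]
    have "coeff_ideal n I a1 \<subseteq> Vs n k a (of_nat N)" unfolding coeff_ideal_def N_def .
    then show "admissible k (\<lambda>i. a i * of_nat (fact (a1 - 1))) (coeff_ideal n I a1)"
      unfolding N_def[symmetric] adm_scale[OF Npos] Vs_def by auto
  next
    assume "admissible k (\<lambda>i. a i * of_nat (fact (a1 - 1))) (coeff_ideal n I a1)"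
    then have admC: "\<forall>g\<in>coeff_ideal n I a1. \<forall>m. g m \<noteq> 0 \<longrightarrow> of_nat N \<le> wt k a m"
      unfolding N_def[symmetric] adm_scale[OF Npos] .
    show "admissible k a I" unfolding admI
    proof (intro ballI allI impI)
      fix f m1 assume f: "f \<in> I" and fm1: "f m1 \<noteq> 0"
      show "1 \<le> wt k a m1"
      proof (rule ccontr)
        assume lt: "\<not> 1 \<le> wt k a m1"
        obtain w m where m: "f m \<noteq> 0" "wt k a m = w" and wmin: "\<forall>m'. f m' \<noteq> 0 \<longrightarrow> w \<le> wt k a m'"
          and wle: "w \<le> wt k a m1"
          using min_weight[of k a f m1, OF pos fm1] by blast
        define S where "S = {m. f m \<noteq> 0 \<and> wt k a m = w}"
        have "m \<in> S" unfolding S_def using m by auto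
        moreover have "S \<subseteq> mono_exps n" using f Imps unfolding S_def mps_def by auto
        ultimately obtain m0 where m0: "m0 \<in> S" "\<forall>u\<in>S. lexle m0 u" using lex_min by blast
        have "m0 \<in> mono_exps n" using \<open>S \<subseteq> mono_exps n\<close> m0(1) by auto
        then have gf: "good n k a f w m0" unfolding good_def using m0 wmin unfolding S_def by auto
        from good_mult[OF good_pw[OF gf, of N] good_mone]
        have gg: "good n k a (mps_mult (pw f N) mone) (of_nat N * w + 0) (\<lambda>i. N * m0 i + 0)" .
        have mem: "mps_mult (pw f N) mone \<in> coeff_ideal n I a1"
          unfolding N_def by (rule G_mem[OF assms(6) f])
        have "mps_mult (pw f N) mone (\<lambda>i. N * m0 i + 0) \<noteq> 0"
          and "wt k a (\<lambda>i. N * m0 i + 0) = of_nat N * w + 0" using gg unfolding good_def by auto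
        then have "of_nat N \<le> of_nat N * w" using admC mem by force
        then have "1 \<le> w" using Npos by simp
        then show False using wle lt by linarith
      qed
    qed
  qed
qed

end
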